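(* Consider binary classification of real data points $x \in \mathbb{R}$ drawn from a linearly separable data distribution $p_d$, where the class with label $y=-1$ has class-conditional mean $\mu_1$ and the class with label $y=+1$ has class-conditional mean $\mu_2$, with $\mu_1<\mu_2$, and let $\omega^\star = \frac{\mu_1+\mu_2}{2}$ be the max-margin decision boundary. Run UDP as follows, starting from some $\omega_0 \in \mathbb{R}$ with a fixed step size $\eta \in (0,1)$. At iteration $n$, given the current boundary $\omega_n$: sample $x_n^{(1)} \sim p_d(x \mid y=-1)$ and $x_n^{(2)} \sim p_d(x\mid y=+1)$; form the uncertainty-driven perturbations $\tilde x_n^{(1)} = \beta_n x_n^{(1)} + (1-\beta_n)\omega_n$ and $\tilde x_n^{(2)} = \gamma_n x_n^{(2)} + (1-\gamma_n)\omega_n$, where $\beta_n,\gamma_n \in (0,1)$ are random with $\mathbb{E}[\beta_n]=\mathbb{E}[\gamma_n]=\tfrac12$; an oracle returns $\tilde\omega_n = \alpha_n \tilde x_n^{(1)} + (1-\alpha_n)\tilde x_n^{(2)}$ with $\alpha_n \sim \mathcal{U}(0,1)$ (so $\mathbb{E}[\alpha_n]=\tfrac12$), where $\alpha_n,\beta_n,\gamma_n,x_n^{(1)},x_n^{(2)}$ are mutually independent and independent of $\omega_n$; and update $\omega_{n+1} = \omega_n + \eta(\tilde\omega_n - \omega_n)$. Then, in expectation, the iterate moves towards the max-margin boundary: $\mathbb{E}[\omega_{n+1}\mid\omega_n]$ lies on the segment between $\omega_n$ and $\omega^\star$.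
   Context: UDP (uncertainty-driven perturbations) perturbs each training point by moving it toward the current decision boundary, which is where the model's uncertainty is maximal; in this one-dimensional model the perturbed point is a random convex combination of the original point and the current boundary $\omega_n$. The "oracle" is a weak abstraction of the optimizer: given two (perturbed) data points of opposite classes, it returns a point lying between them, chosen uniformly at random on the segment. *)

theory Defs
  imports "HOL-Probability.Probability"
begin

definition udp_step :: "real \<Rightarrow> real \<Rightarrow> real \<Rightarrow> real \<Rightarrow> real \<Rightarrow> real \<Rightarrow> real \<Rightarrow> real" where
  "udp_step w eta a b c x1 x2 =
     (let xt1 = b * x1 + (1 - b) * w;
          xt2 = c * x2 + (1 - c) * w;
          wt  = a * xt1 + (1 - a) * xt2
      in w + eta * (wt - w))"

end

theory Submission
  imports Defs
begin

lemma alpha_mean: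
  "(\<integral>x. indicator {0<..<1::real} x * x \<partial>lborel) = 1/2"
proof -
  have set_eq: "{x::real. 0<x \<and> x<1} = {0<..<1}" by auto
  have d: "((\<lambda>x::real. x^2/2) has_vector_derivative x) (at x within {0..1})" for x :: real
    unfolding has_real_derivative_iff_has_vector_derivative[symmetric]
    by (auto intro!: derivative_eq_intros)
  have "(LBINT x=ereal 0..ereal 1. x) = (1::real)^2/2 - 0^2/2"
    using interval_integral_FTC_finite[of 0 1 "\<lambda>x. x" "\<lambda>x. x^2/2"] d
    by (simp add: continuous_on_id)
  moreover have "(LBINT x=ereal 0..ereal 1. x) = (\<integral>x. indicator {0<..<1::real} x * x \<partial>lborel)"
    using set_eq by (simp add: interval_lebesgue_integral_def set_lebesgue_integral_def einterval_def)
  ultimately show ?thesis by simp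
qed

lemma add_E:
  fixes f g :: "'s \<Rightarrow> real"
  assumes "integrable M f \<and> integral\<^sup>L M f = a" "integrable M g \<and> integral\<^sup>L M g = b"
  shows "integrable M (\<lambda>s. f s + g s) \<and> integral\<^sup>L M (\<lambda>s. f s + g s) = a + b"
  using assms by simp

lemma diff_E:
  fixes f g :: "'s \<Rightarrow> real"
  assumes "integrable M f \<and> integral\<^sup>L M f = a" "integrable M g \<and> integral\<^sup>L M g = b"
  shows "integrable M (\<lambda>s. f s - g s) \<and> integral\<^sup>L M (\<lambda>s. f s - g s) = a - b"
  using assms by simp

theorem theorem1:
  fixes M :: "'s measure"
    and \<alpha> \<beta> \<gamma> X1 X2 :: "'s \<Rightarrow> real"
    and \<mu>1 \<mu>2 \<eta> w :: real
  assumes "prob_space M"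
    and sep: "\<exists>c. (AE s in M. X1 s < c) \<and> (AE s in M. c < X2 s)"
    and X1: "integrable M X1" "prob_space.expectation M X1 = \<mu>1"
    and X2: "integrable M X2" "prob_space.expectation M X2 = \<mu>2"
    and "\<mu>1 < \<mu>2"
    and eta: "0 < \<eta>" "\<eta> < 1"
    and alpha: "distributed M lborel \<alpha> (\<lambda>x. indicator {0<..<1} x)"
    and beta: "\<beta> \<in> borel_measurable M" "AE s in M. 0 < \<beta> s \<and> \<beta> s < 1"
              "prob_space.expectation M \<beta> = 1/2"
    and gamma: "\<gamma> \<in> borel_measurable M" "AE s in M. 0 < \<gamma> s \<and> \<gamma> s < 1"
              "prob_space.expectation M \<gamma> = 1/2"
    and indep: "prob_space.indep_vars M (\<lambda>_. borel) (\<lambda>i. [\<alpha>, \<beta>, \<gamma>, X1, X2] ! i) {0..<5}"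
  shows "prob_space.expectation M (\<lambda>s. udp_step w \<eta> (\<alpha> s) (\<beta> s) (\<gamma> s) (X1 s) (X2 s))
           \<in> closed_segment w ((\<mu>1 + \<mu>2) / 2)"
proof -
  interpret prob_space M by fact
  let ?X = "\<lambda>i. [\<alpha>, \<beta>, \<gamma>, X1, X2] ! i"
  have am: "\<alpha> \<in> borel_measurable M"
    using distributed_measurable[OF alpha] by simp
  have "AE s in M. 0 < \<alpha> s \<and> \<alpha> s < 1"
    apply (subst distributed_AE2[OF alpha])
     apply measurable
    apply (rule AE_I2)
    apply (simp add: indicator_def)
    done
  then have "AE s in M. norm (\<alpha> s) \<le> norm (1::real)"
    by (rule eventually_mono) simp
  then have ia: "integrable M \<alpha>"
    by (rule Bochner_Integration.integrable_bound[OF integrable_const am])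
  have "AE s in M. norm (\<beta> s) \<le> norm (1::real)"
    using beta(2) by (rule eventually_mono) simp
  then have ib: "integrable M \<beta>"
    by (rule Bochner_Integration.integrable_bound[OF integrable_const beta(1)])
  have "AE s in M. norm (\<gamma> s) \<le> norm (1::real)"
    using gamma(2) by (rule eventually_mono) simp
  then have ig: "integrable M \<gamma>"
    by (rule Bochner_Integration.integrable_bound[OF integrable_const gamma(1)])
  have alpha': "distributed M lborel \<alpha> (\<lambda>x. ennreal (indicator {0<..<1::real} x))"
    using alpha by (simp add: ennreal_indicator)
  have Ea: "expectation \<alpha> = 1/2"
    using distributed_integral[OF alpha', of "\<lambda>x. x"] alpha_mean by simp
  have int: "integrable M (?X i)" if "i \<in> {0..<5}" for i
  proof -
    have "i = 0 \<or> i = 1 \<or> i = 2 \<or> i = 3 \<or> i = 4" using that by auto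
    then show ?thesis using ia ib ig X1(1) X2(1) by (elim disjE) simp_all
  qed
  have P: "integrable M (\<lambda>s. \<Prod>i\<in>J. ?X i s) \<and> expectation (\<lambda>s. \<Prod>i\<in>J. ?X i s) = (\<Prod>i\<in>J. expectation (?X i))"
    if "J \<subseteq> {0..<5}" for J
  proof -
    have f: "finite J" using that finite_subset by blast
    have iJ: "indep_vars (\<lambda>_. borel) ?X J" by (rule indep_vars_subset[OF indep that])
    have ii: "integrable M (?X i)" if "i \<in> J" for i
      using int that \<open>J \<subseteq> {0..<5}\<close> by (meson subsetD)
    show ?thesis by (intro conjI indep_vars_integrable[OF f iJ] indep_vars_lebesgue_integral[OF f iJ] ii)
  qed
  have P1: "integrable M (\<lambda>s. \<alpha> s * (\<beta> s * X1 s)) \<and> expectation (\<lambda>s. \<alpha> s * (\<beta> s * X1 s)) = \<mu>1/4"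
    using P[of "{0,1,3}"] Ea beta(3) X1(2) by simp
  have P2: "integrable M (\<lambda>s. \<alpha> s * \<beta> s) \<and> expectation (\<lambda>s. \<alpha> s * \<beta> s) = 1/4"
    using P[of "{0,1}"] Ea beta(3) by simp
  have P3: "integrable M (\<lambda>s. \<gamma> s * X2 s) \<and> expectation (\<lambda>s. \<gamma> s * X2 s) = \<mu>2/2"
    using P[of "{2,4}"] gamma(3) X2(2) by simp
  have P4: "integrable M (\<lambda>s. \<alpha> s * (\<gamma> s * X2 s)) \<and> expectation (\<lambda>s. \<alpha> s * (\<gamma> s * X2 s)) = \<mu>2/4"
    using P[of "{0,2,4}"] Ea gamma(3) X2(2) by simp
  have P5: "integrable M (\<lambda>s. \<alpha> s * \<gamma> s) \<and> expectation (\<lambda>s. \<alpha> s * \<gamma> s) = 1/4"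
    using P[of "{0,2}"] Ea gamma(3) by simp
  have eq: "(\<lambda>s. udp_step w \<eta> (\<alpha> s) (\<beta> s) (\<gamma> s) (X1 s) (X2 s)) =
    (\<lambda>s. w + \<eta> * (\<alpha> s * (\<beta> s * X1 s) - w * (\<alpha> s * \<beta> s) + \<gamma> s * X2 s
       - \<alpha> s * (\<gamma> s * X2 s) - w * \<gamma> s + w * (\<alpha> s * \<gamma> s)))"
    by (rule ext) (simp add: udp_step_def Let_def algebra_simps)
  have "expectation (\<lambda>s. udp_step w \<eta> (\<alpha> s) (\<beta> s) (\<gamma> s) (X1 s) (X2 s))
     = w + \<eta> * (\<mu>1/4 - w * (1/4) + \<mu>2/2 - \<mu>2/4 - w * (1/2) + w * (1/4))"
  proof -
    let ?f = "\<lambda>s. \<alpha> s * (\<beta> s * X1 s) - w * (\<alpha> s * \<beta> s) + \<gamma> s * X2 s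
       - \<alpha> s * (\<gamma> s * X2 s) - w * \<gamma> s + w * (\<alpha> s * \<gamma> s)"
    have i1: "integrable M (\<lambda>s. w * (\<alpha> s * \<beta> s))" using P2 by auto
    have i2: "integrable M (\<lambda>s. w * \<gamma> s)" using ig by auto
    have i3: "integrable M (\<lambda>s. w * (\<alpha> s * \<gamma> s))" using P5 by auto
    have e1: "expectation (\<lambda>s. w * (\<alpha> s * \<beta> s)) = w * (1/4)" using P2 by simp
    have e2: "expectation (\<lambda>s. w * \<gamma> s) = w * (1/2)" using gamma(3) by simp
    have e3: "expectation (\<lambda>s. w * (\<alpha> s * \<gamma> s)) = w * (1/4)" using P5 by simp
    have "integrable M ?f \<and> expectation ?f = \<mu>1/4 - w * (1/4) + \<mu>2/2 - \<mu>2/4 - w * (1/2) + w * (1/4)"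
      by (rule add_E[OF diff_E[OF diff_E[OF add_E[OF diff_E[OF P1 conjI[OF i1 e1]] P3] P4]
            conjI[OF i2 e2]] conjI[OF i3 e3]])
    then have "expectation (\<lambda>s. w + \<eta> * ?f s) = w + \<eta> * expectation ?f"
      by (simp add: prob_space)
    with \<open>integrable M ?f \<and> _\<close> show ?thesis unfolding eq by simp
  qed
  also have "\<dots> = (1 - \<eta>/2) *\<^sub>R w + (\<eta>/2) *\<^sub>R ((\<mu>1 + \<mu>2) / 2)"
    by (simp add: algebra_simps)
  finally show ?thesis using eta unfolding in_segment by (intro conjI exI[of _ "\<eta>/2"]) auto
qed

end
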